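(* Let $n\le m$ and let $\mathcal C$ be an $(n,n-\rho)$ linear code over $\mathrm{GF}(q^m)$ with minimum rank distance $\rho+1$ (an MRD code) and rank covering radius $\rho$. Let $\bar f:\mathrm{GF}(q^m)^n\to\mathrm{GF}(q^{m+\rho})^n$ be the map defined below. Then $\bar f(\mathcal C)$ is a code of length $n$ over $\mathrm{GF}(q^{m+\rho})$ with cardinality $q^{m(n-\rho)}$ and rank covering radius $\rho$.
   Context: The rank $\mathrm{rk}(\mathbf x)$ of a vector over $\mathrm{GF}(q^N)$ is the maximum number of its coordinates linearly independent over $\mathrm{GF}(q)$; $d_{\mathrm R}(\mathbf x,\mathbf y)=\mathrm{rk}(\mathbf x-\mathbf y)$; the rank covering radius of a code $C\subseteq\mathrm{GF}(q^N)^n$ is $\max_{\mathbf x}\min_{\mathbf c\in C}d_{\mathrm R}(\mathbf x,\mathbf c)$. Let $\alpha_0,\dots,\alpha_{m+\rho-1}$ be a basis of $\mathrm{GF}(q^{m+\rho})$ over $\mathrm{GF}(q)$ and $\beta_0,\dots,\beta_{m-1}$ a basis of $\mathrm{GF}(q^m)$ over $\mathrm{GF}(q)$. Let $f:\mathrm{GF}(q^m)\to\mathrm{GF}(q^{m+\rho})$ be the $\mathrm{GF}(q)$-linear map with $f(\beta_i)=\alpha_i$ for $0\le i\le m-1$, and let $\bar f(v_0,\dots,v_{n-1})=(f(v_0),\dots,f(v_{n-1}))$. *)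

theory Defs
  imports "HOL-Analysis.Analysis"
begin

text \<open>The ground field GF(q) is a finite field type 'k; an extension field
  (type 'b or 'c) is viewed as a GF(q)-vector space through a field embedding
  iota :: 'k => 'b.\<close>

definition field_emb :: "('k::field \<Rightarrow> 'b::field) \<Rightarrow> bool" where
  "field_emb \<iota> \<longleftrightarrow> \<iota> 1 = 1 \<and> (\<forall>a b. \<iota> (a + b) = \<iota> a + \<iota> b) \<and> (\<forall>a b. \<iota> (a * b) = \<iota> a * \<iota> b)"

definition lin_indep_over :: "('k::field \<Rightarrow> 'b::field) \<Rightarrow> ('i \<Rightarrow> 'b) \<Rightarrow> 'i set \<Rightarrow> bool" where
  "lin_indep_over \<iota> v S \<longleftrightarrow>
     (\<forall>c :: 'i \<Rightarrow> 'k. (\<Sum>i\<in>S. \<iota> (c i) * v i) = 0 \<longrightarrow> (\<forall>i\<in>S. c i = 0))"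

definition is_basis_over :: "('k::field \<Rightarrow> 'b::field) \<Rightarrow> (nat \<Rightarrow> 'b) \<Rightarrow> nat \<Rightarrow> bool" where
  "is_basis_over \<iota> v k \<longleftrightarrow> lin_indep_over \<iota> v {..<k} \<and>
     (\<forall>y. \<exists>c :: nat \<Rightarrow> 'k. y = (\<Sum>i<k. \<iota> (c i) * v i))"

definition rk :: "('k::field \<Rightarrow> 'b::field) \<Rightarrow> 'b ^ 'n::finite \<Rightarrow> nat" where
  "rk \<iota> x = Max {card S | S. lin_indep_over \<iota> (\<lambda>i. x $ i) S}"

definition rank_dist :: "('k::field \<Rightarrow> 'b::field) \<Rightarrow> 'b ^ 'n::finite \<Rightarrow> 'b ^ 'n \<Rightarrow> nat" where
  "rank_dist \<iota> x y = rk \<iota> (x - y)"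

definition has_min_rank_dist :: "('k::field \<Rightarrow> 'b::field) \<Rightarrow> ('b ^ 'n::finite) set \<Rightarrow> nat \<Rightarrow> bool" where
  "has_min_rank_dist \<iota> C d \<longleftrightarrow>
     (\<exists>x\<in>C. \<exists>y\<in>C. x \<noteq> y \<and> rank_dist \<iota> x y = d) \<and>
     (\<forall>x\<in>C. \<forall>y\<in>C. x \<noteq> y \<longrightarrow> d \<le> rank_dist \<iota> x y)"

definition rank_cov_radius :: "('k::field \<Rightarrow> 'b::{field,finite}) \<Rightarrow> ('b ^ 'n::finite) set \<Rightarrow> nat" where
  "rank_cov_radius \<iota> C = Max (range (\<lambda>x. Min ((\<lambda>c. rank_dist \<iota> x c) ` C)))"

definition fbar :: "('b \<Rightarrow> 'c) \<Rightarrow> 'b ^ 'n \<Rightarrow> 'c ^ 'n" where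
  "fbar f v = (\<chi> i. f (v $ i))"

end

theory Submission imports Defs "HOL-Library.FuncSet" begin

definition phi :: "('k::field \<Rightarrow> 'b::field) \<Rightarrow> 'b ^ 'n::finite \<Rightarrow> 'k ^ 'n \<Rightarrow> 'b" where
  "phi \<iota> v a = (\<Sum>i\<in>UNIV. \<iota> (a $ i) * v $ i)"

lemma emb0: "field_emb \<iota> \<Longrightarrow> \<iota> 0 = 0"
  unfolding field_emb_def by (metis add_0 add_left_imp_eq add.right_neutral)

lemma emb_add: "field_emb \<iota> \<Longrightarrow> \<iota> (a + b) = \<iota> a + \<iota> b"
  unfolding field_emb_def by blast

lemma emb_mult: "field_emb \<iota> \<Longrightarrow> \<iota> (a * b) = \<iota> a * \<iota> b"
  unfolding field_emb_def by blast

lemma phi_add: "field_emb \<iota> \<Longrightarrow> phi \<iota> v (a + a') = phi \<iota> v a + phi \<iota> v a'"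
  unfolding phi_def by (simp add: emb_add distrib_right sum.distrib)

lemma phi_scale: "field_emb \<iota> \<Longrightarrow> phi \<iota> v (s *s a) = \<iota> s * phi \<iota> v a"
  unfolding phi_def by (simp add: emb_mult sum_distrib_left mult.assoc)

lemma phi_zero: "field_emb \<iota> \<Longrightarrow> phi \<iota> v 0 = 0"
  unfolding phi_def by (simp add: emb0)

lemma phi_diff_v: "phi \<iota> (v - w) a = phi \<iota> v a - phi \<iota> w a"
  unfolding phi_def by (simp add: right_diff_distrib sum_subtractf)

lemma phi_diff_a: "field_emb \<iota> \<Longrightarrow> phi \<iota> v (a - a') = phi \<iota> v a - phi \<iota> v a'"
  using phi_add[of \<iota> v "a - a'" a'] by (simp add: algebra_simps)

lemma ker_subspace: "field_emb \<iota> \<Longrightarrow> vec.subspace {a. phi \<iota> v a = 0}"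
  unfolding vec.subspace_def by (simp add: phi_add phi_scale phi_zero)

lemma card_span_indep:
  fixes B :: "('a::{field,finite} ^ 'n::finite) set"
  assumes "vec.independent B"
  shows "card (vec.span B) = CARD('a) ^ card B"
proof -
  have fin: "finite B" by simp
  let ?g = "\<lambda>u. \<Sum>v\<in>B. u v *s v"
  have sp: "vec.span B = ?g ` (B \<rightarrow>\<^sub>E UNIV)"
  proof
    show "vec.span B \<subseteq> ?g ` (B \<rightarrow>\<^sub>E UNIV)"
    proof
      fix x assume "x \<in> vec.span B"
      then obtain u where x: "x = ?g u" using vec.span_finite[OF fin] by auto
      have "x = ?g (restrict u B)" unfolding x by (intro sum.cong) auto
      moreover have "restrict u B \<in> B \<rightarrow>\<^sub>E UNIV" by simp
      ultimately show "x \<in> ?g ` (B \<rightarrow>\<^sub>E UNIV)" by blast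
    qed
    show "?g ` (B \<rightarrow>\<^sub>E UNIV) \<subseteq> vec.span B"
      using vec.span_finite[OF fin] by auto
  qed
  have inj: "inj_on ?g (B \<rightarrow>\<^sub>E UNIV)"
  proof (rule inj_onI)
    fix u w assume u: "u \<in> B \<rightarrow>\<^sub>E UNIV" and w: "w \<in> B \<rightarrow>\<^sub>E UNIV" and e: "?g u = ?g w"
    have "(\<Sum>v\<in>B. (u v - w v) *s v) = 0"
      using e by (simp add: vector_sub_rdistrib sum_subtractf)
    hence "\<forall>v\<in>B. u v - w v = 0"
      using assms unfolding vec.independent_explicit
      by (elim conjE allE[where x="\<lambda>v. u v - w v"]) simp
    thus "u = w" using u w by (auto simp: PiE_iff intro!: extensionalityI)
  qed
  have "card (vec.span B) = card (B \<rightarrow>\<^sub>E (UNIV::'a set))"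
    unfolding sp by (rule card_image[OF inj])
  also have "\<dots> = CARD('a) ^ card B" by (simp add: card_PiE fin)
  finally show ?thesis .
qed

lemma card_field_ge2: "2 \<le> CARD('a::{field,finite})"
proof -
  have "card {0::'a, 1} = 2" by simp
  moreover have "card {0::'a, 1} \<le> CARD('a)" by (rule card_mono) auto
  ultimately show ?thesis by simp
qed

lemma card_supp:
  fixes S :: "'n::finite set"
  shows "card {a::'k::{field,finite}^'n. \<forall>i. i \<notin> S \<longrightarrow> a $ i = 0} = CARD('k) ^ card S"
proof -
  let ?E = "{a::'k^'n. \<forall>i. i \<notin> S \<longrightarrow> a $ i = 0}"
  let ?h = "\<lambda>a::'k^'n. restrict (\<lambda>i. a $ i) S"
  have inj: "inj_on ?h ?E"
  proof (rule inj_onI)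
    fix a b assume a: "a \<in> ?E" and b: "b \<in> ?E" and e: "?h a = ?h b"
    show "a = b"
    proof (rule vec_eq_iff[THEN iffD2], rule allI)
      fix i show "a $ i = b $ i"
      proof (cases "i \<in> S")
        case True thus ?thesis using fun_cong[OF e, of i] by simp
      next
        case False thus ?thesis using a b by simp
      qed
    qed
  qed
  have im: "?h ` ?E = (S \<rightarrow>\<^sub>E (UNIV::'k set))"
  proof
    show "?h ` ?E \<subseteq> S \<rightarrow>\<^sub>E UNIV" by (rule image_subsetI) simp
    show "S \<rightarrow>\<^sub>E UNIV \<subseteq> ?h ` ?E"
    proof
      fix g assume g: "g \<in> S \<rightarrow>\<^sub>E (UNIV::'k set)"
      let ?a = "(\<chi> i. if i \<in> S then g i else 0) :: 'k^'n"
      have aE: "?a \<in> ?E" by simp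
      have hg: "?h ?a = g"
      proof (rule ext)
        fix i show "?h ?a i = g i" using g by (cases "i \<in> S") (auto simp: PiE_iff extensional_def)
      qed
      show "g \<in> ?h ` ?E" using image_eqI[where f="?h" and x="?a" and A="?E" and b=g] hg aE by simp
    qed
  qed
  have "card ?E = card (S \<rightarrow>\<^sub>E (UNIV::'k set))" using card_image[OF inj] im by simp
  thus ?thesis by (simp add: card_PiE)
qed


lemma rk_le:
  fixes \<iota> :: "'k::{field,finite} \<Rightarrow> 'b::field" and v :: "'b ^ 'n::finite"
  assumes emb: "field_emb \<iota>"
    and cZ: "CARD('k) ^ (CARD('n) - r) \<le> card {a::'k^'n. phi \<iota> v a = 0}"
  shows "rk \<iota> v \<le> r"
proof -
  let ?Z = "{a::'k^'n. phi \<iota> v a = 0}"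
  have q2: "1 < CARD('k)" using card_field_ge2[where 'a='k] by simp
  have main: "card S \<le> r" if ind: "lin_indep_over \<iota> (\<lambda>i. v $ i) S" for S :: "'n set"
  proof -
    let ?E = "{a::'k^'n. \<forall>i. i \<notin> S \<longrightarrow> a $ i = 0}"
    have key: "e = e'" if e: "e \<in> ?E" and z: "z \<in> ?Z" and e': "e' \<in> ?E" and z': "z' \<in> ?Z"
        and eq: "e + z = e' + z'" for e z e' z'
    proof -
      define d where "d = e - e'"
      have "e = e' + z' - z" using eq by (simp add: eq_diff_eq)
      hence dz: "d = z' - z" unfolding d_def by simp
      have pd: "phi \<iota> v d = 0" using z z' dz phi_diff_a[OF emb, of v z' z] by simp
      have dE: "\<forall>i. i \<notin> S \<longrightarrow> d $ i = 0" using e e' by (simp add: d_def)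
      have "(\<Sum>i\<in>S. \<iota> (d $ i) * v $ i) = phi \<iota> v d"
        unfolding phi_def by (rule sum.mono_neutral_left) (auto simp: dE emb0[OF emb])
      hence "\<forall>i\<in>S. d $ i = 0" using ind pd unfolding lin_indep_over_def
        by (elim allE[where x="\<lambda>i. d $ i"]) simp
      hence "d = 0" using dE unfolding vec_eq_iff by auto
      thus "e = e'" by (simp add: d_def)
    qed
    have inj: "inj_on (\<lambda>(e, z). e + z) (?E \<times> ?Z)"
      unfolding inj_on_def using key by fastforce
    have "card (?E \<times> ?Z) \<le> CARD('k ^ 'n)"
      using card_image[OF inj] card_mono[of UNIV "(\<lambda>(e, z). e + z) ` (?E \<times> ?Z)"] by simp
    hence "CARD('k) ^ card S * card ?Z \<le> CARD('k) ^ CARD('n)"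
      by (simp add: card_cartesian_product card_supp)
    hence "CARD('k) ^ card S * CARD('k) ^ (CARD('n) - r) \<le> CARD('k) ^ CARD('n)"
      using cZ by (meson le_trans mult_le_mono2)
    hence "CARD('k) ^ (card S + (CARD('n) - r)) \<le> CARD('k) ^ CARD('n)"
      by (simp add: power_add)
    hence "card S + (CARD('n) - r) \<le> CARD('n)" using q2 power_le_imp_le_exp by blast
    moreover have "card S \<le> CARD('n)" by (simp add: card_mono)
    ultimately show ?thesis by arith
  qed
  have fin: "finite {card S | S. lin_indep_over \<iota> (\<lambda>i. v $ i) S}"
  proof (rule finite_subset)
    show "{card S | S. lin_indep_over \<iota> (\<lambda>i. v $ i) S} \<subseteq> {..CARD('n)}"
      by (auto simp: card_mono)
  qed simp
  have ne: "{card S | S. lin_indep_over \<iota> (\<lambda>i. v $ i) S} \<noteq> {}"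
    unfolding lin_indep_over_def by auto
  show ?thesis unfolding rk_def using fin ne main by (auto simp: Max_le_iff)
qed


lemma add_hom0:
  assumes "\<forall>x y. f (x + y) = f x + f (y::'b::ab_group_add)"
  shows "f 0 = (0::'c::ab_group_add)"
proof -
  have "f (0 + 0) = f 0 + f 0" using assms by blast
  thus ?thesis by simp
qed

lemma add_hom_diff:
  assumes "\<forall>x y. f (x + y) = f x + f (y::'b::ab_group_add)"
  shows "f (x - y) = f x - (f y :: 'c::ab_group_add)"
proof -
  have "f (x - y + y) = f (x - y) + f y" using assms by blast
  hence "f (x - y) + f y = f x" by simp
  thus ?thesis by (simp add: eq_diff_eq)
qed

lemma add_hom_sum:
  assumes "\<forall>x y. f (x + y) = f x + f (y::'b::ab_group_add)"
  shows "f (\<Sum>i\<in>S. g i) = (\<Sum>i\<in>S. (f (g i) :: 'c::ab_group_add))"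
  using sum_comp_morphism[of f g S] add_hom0[OF assms] assms by (simp add: o_def)

lemma f_inj:
  fixes \<iota>1 :: "'k::field \<Rightarrow> 'b::field" and \<iota>2 :: "'k \<Rightarrow> 'c::field"
    and f :: "'b \<Rightarrow> 'c"
  assumes emb1: "field_emb \<iota>1" and emb2: "field_emb \<iota>2"
    and ba: "is_basis_over \<iota>2 \<alpha> (m + \<rho>)"
    and bb: "is_basis_over \<iota>1 \<beta> m"
    and fadd: "\<forall>x y. f (x + y) = f x + f y"
    and fsc: "\<forall>a x. f (\<iota>1 a * x) = \<iota>2 a * f x"
    and fb: "\<forall>i<m. f (\<beta> i) = \<alpha> i"
  shows "inj f"
proof -
  have z: "x = 0" if fx: "f x = 0" for x
  proof -
    obtain c where x: "x = (\<Sum>i<m. \<iota>1 (c i) * \<beta> i)" using bb unfolding is_basis_over_def by blast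
    have fxs: "f x = (\<Sum>i<m. \<iota>2 (c i) * \<alpha> i)" unfolding x add_hom_sum[OF fadd] using fsc fb by simp
    let ?c = "\<lambda>i. if i < m then c i else 0"
    have "(\<Sum>i<m + \<rho>. \<iota>2 (?c i) * \<alpha> i) = (\<Sum>i<m. \<iota>2 (?c i) * \<alpha> i)"
      by (rule sum.mono_neutral_right) (auto simp: emb0[OF emb2])
    also have "\<dots> = (\<Sum>i<m. \<iota>2 (c i) * \<alpha> i)" by simp
    also have "\<dots> = 0" using fx fxs by simp
    finally have "\<forall>i\<in>{..<m + \<rho>}. ?c i = 0" using ba unfolding is_basis_over_def lin_indep_over_def
      by (elim conjE allE[where x="?c"]) simp
    hence "\<forall>i<m. c i = 0" by (metis (no_types, lifting) lessThan_iff trans_less_add1)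
    hence "x = (\<Sum>i<m. \<iota>1 0 * \<beta> i)" unfolding x by simp
    thus ?thesis by (simp add: emb0[OF emb1])
  qed
  show ?thesis
  proof (rule injI)
    fix x y assume "f x = f y"
    hence "f (x - y) = 0" using add_hom_diff[OF fadd] by simp
    thus "x = y" using z by fastforce
  qed
qed


lemma phi_fbar:
  assumes fadd: "\<forall>x y. f (x + y) = f x + f y"
    and fsc: "\<forall>a x. f (\<iota>1 a * x) = \<iota>2 a * f x"
  shows "phi \<iota>2 (fbar f c) a = f (phi \<iota>1 c a)"
  unfolding phi_def fbar_def add_hom_sum[OF fadd] using fsc by simp

lemma fbar_diff:
  fixes f :: "'b::ab_group_add \<Rightarrow> 'c::ab_group_add" and x y :: "'b ^ 'n::finite"
  assumes fadd: "\<forall>x y. f (x + y) = f x + f y"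
  shows "fbar f (x - y) = fbar f x - fbar f y"
  unfolding fbar_def using add_hom_diff[OF fadd] by (simp add: vec_eq_iff)

lemma fbar_inj:
  assumes "inj f" shows "inj (fbar f)"
proof (rule injI)
  fix x y assume "fbar f x = fbar f y"
  hence "\<forall>i. f (x $ i) = f (y $ i)" unfolding fbar_def by (simp add: vec_eq_iff)
  thus "x = y" using assms by (simp add: vec_eq_iff inj_eq)
qed

lemma rk_fbar:
  fixes \<iota>1 :: "'k::field \<Rightarrow> 'b::field" and \<iota>2 :: "'k \<Rightarrow> 'c::field"
    and f :: "'b \<Rightarrow> 'c" and z :: "'b ^ 'n::finite"
  assumes fadd: "\<forall>x y. f (x + y) = f x + f y"
    and fsc: "\<forall>a x. f (\<iota>1 a * x) = \<iota>2 a * f x"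
    and inj: "inj f"
  shows "rk \<iota>2 (fbar f z) = rk \<iota>1 z"
proof -
  have f0: "f 0 = 0" using add_hom0[OF fadd] .
  have eq: "lin_indep_over \<iota>2 (\<lambda>i. fbar f z $ i) S \<longleftrightarrow> lin_indep_over \<iota>1 (\<lambda>i. z $ i) S" for S
  proof -
    have "(\<Sum>i\<in>S. \<iota>2 (c i) * fbar f z $ i) = f (\<Sum>i\<in>S. \<iota>1 (c i) * z $ i)" for c
      unfolding fbar_def add_hom_sum[OF fadd] using fsc by simp
    moreover have "f w = 0 \<longleftrightarrow> w = 0" for w using inj f0 by (metis injD)
    ultimately show ?thesis unfolding lin_indep_over_def by simp
  qed
  show ?thesis unfolding rk_def eq ..
qed


lemma card_K:
  fixes \<iota>2 :: "'k::{field,finite} \<Rightarrow> 'c::{field,finite}" and f :: "'b::{field,finite} \<Rightarrow> 'c"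
    and x :: "'c ^ 'n::finite"
  assumes emb2: "field_emb \<iota>2" and fadd: "\<forall>x y. f (x + y) = f x + f y" and inj: "inj f"
    and ck: "CARD('k) = q" and cb: "CARD('b) = q ^ m" and cc: "CARD('c) = q ^ (m + \<rho>)"
  shows "q ^ (CARD('n) - \<rho>) \<le> card {a::'k^'n. phi \<iota>2 x a \<in> range f}"
proof -
  let ?K = "{a::'k^'n. phi \<iota>2 x a \<in> range f}"
  let ?P = "\<lambda>(a::'k^'n, y::'b). phi \<iota>2 x a + f y"
  have q2: "1 < q" using card_field_ge2[where 'a='k] ck by simp
  have fib: "card (?P -` {w}) \<le> card ?K" for w
  proof (cases "?P -` {w} = {}")
    case True thus ?thesis by simp
  next
    case False
    then obtain a0 y0 where p0: "?P (a0, y0) = w" by auto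
    let ?g = "\<lambda>p::('k^'n) \<times> 'b. a0 - fst p"
    have inj_g: "inj_on ?g (?P -` {w})"
    proof (rule inj_onI)
      fix p p' assume p: "p \<in> ?P -` {w}" and p': "p' \<in> ?P -` {w}" and e: "?g p = ?g p'"
      obtain a y where pa: "p = (a, y)" by (cases p)
      obtain a' y' where pa': "p' = (a', y')" by (cases p')
      have "a = a'" using e pa pa' by simp
      moreover have "f y = f y'" using p p' pa pa' \<open>a = a'\<close> by (metis (mono_tags, lifting) add_left_cancel case_prod_conv vimage_singleton_eq)
      ultimately show "p = p'" using pa pa' inj by (simp add: inj_eq)
    qed
    have img: "?g ` (?P -` {w}) \<subseteq> ?K"
    proof
      fix b assume "b \<in> ?g ` (?P -` {w})"
      then obtain a y where py: "?P (a, y) = w" and b: "b = a0 - a" by auto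
      have "phi \<iota>2 x b = phi \<iota>2 x a0 - phi \<iota>2 x a" unfolding b by (rule phi_diff_a[OF emb2])
      also have "\<dots> = f y - f y0" using py p0 by (simp add: algebra_simps)
      also have "\<dots> = f (y - y0)" using add_hom_diff[OF fadd] by simp
      finally show "b \<in> ?K" by simp
    qed
    have "card (?P -` {w}) = card (?g ` (?P -` {w}))" using card_image[OF inj_g] by simp
    also have "\<dots> \<le> card ?K" by (rule card_mono[OF _ img]) simp
    finally show ?thesis .
  qed
  have "card (UNIV :: (('k^'n) \<times> 'b) set) = card (\<Union>w\<in>UNIV. ?P -` {w})" by (simp add: vimage_UN[symmetric])
  also have "\<dots> \<le> (\<Sum>w\<in>UNIV. card (?P -` {w}))" by (rule card_UN_le) simp
  also have "\<dots> \<le> (\<Sum>w\<in>(UNIV::'c set). card ?K)" by (rule sum_mono[OF fib])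
  finally have "q ^ CARD('n) * q ^ m \<le> q ^ (m + \<rho>) * card ?K"
    using ck cb cc by (simp add: card_cartesian_product[symmetric] UNIV_Times_UNIV[symmetric] del: UNIV_Times_UNIV)
  show ?thesis
  proof (cases "\<rho> \<le> CARD('n)")
    case True
    have "q ^ (m + \<rho>) * q ^ (CARD('n) - \<rho>) = q ^ CARD('n) * q ^ m"
      using True by (simp add: power_add[symmetric] add.commute)
    hence "q ^ (m + \<rho>) * q ^ (CARD('n) - \<rho>) \<le> q ^ (m + \<rho>) * card ?K"
      using \<open>q ^ CARD('n) * q ^ m \<le> _\<close> by simp
    thus ?thesis using q2 by simp
  next
    case False
    have "0 \<in> ?K" using phi_zero[OF emb2] add_hom0[OF fadd] by (metis (mono_tags) mem_Collect_eq rangeI)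
    hence "1 \<le> card ?K" by (metis One_nat_def Suc_leI card_gt_0_iff equals0D finite)
    thus ?thesis using False by simp
  qed
qed


theorem proposition9:
  fixes q m \<rho> :: nat
    and \<iota>1 :: "'k::{field,finite} \<Rightarrow> 'b::{field,finite}"
    and \<iota>2 :: "'k \<Rightarrow> 'c::{field,finite}"
    and \<alpha> :: "nat \<Rightarrow> 'c" and \<beta> :: "nat \<Rightarrow> 'b"
    and f :: "'b \<Rightarrow> 'c"
    and C :: "('b ^ 'n::finite) set"
  assumes "CARD('k) = q"
    and "CARD('b) = q ^ m"
    and "CARD('c) = q ^ (m + \<rho>)"
    and "field_emb \<iota>1" and "field_emb \<iota>2"
    and "is_basis_over \<iota>2 \<alpha> (m + \<rho>)"
    and "is_basis_over \<iota>1 \<beta> m"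
    and "\<forall>x y. f (x + y) = f x + f y"
    and "\<forall>a x. f (\<iota>1 a * x) = \<iota>2 a * f x"
    and "\<forall>i<m. f (\<beta> i) = \<alpha> i"
    and "CARD('n) \<le> m"
    and "vec.subspace C"
    and "vec.dim C = CARD('n) - \<rho>"
    and "has_min_rank_dist \<iota>1 C (\<rho> + 1)"
    and "rank_cov_radius \<iota>1 C = \<rho>"
  shows "card (fbar f ` C) = q ^ (m * (CARD('n) - \<rho>))
    \<and> rank_cov_radius \<iota>2 (fbar f ` C) = \<rho>"
proof -
  note ck = assms(1) and cb = assms(2) and cc = assms(3) and emb1 = assms(4) and emb2 = assms(5)
    and ba = assms(6) and bb = assms(7) and fadd = assms(8) and fsc = assms(9) and fb = assms(10)
    and subC = assms(12) and dimC = assms(13) and mrd = assms(14) and crad = assms(15)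
  let ?n = "CARD('n)"
  have q2: "1 < q" using card_field_ge2[where 'a='k] ck by simp
  have injf: "inj f" by (rule f_inj[OF emb1 emb2 ba bb fadd fsc fb])
  have f0: "f 0 = 0" by (rule add_hom0[OF fadd])
  obtain BC where BC: "BC \<subseteq> C" "vec.independent BC" "C \<subseteq> vec.span BC" "card BC = vec.dim C"
    using vec.basis_exists by blast
  have "vec.span BC \<subseteq> C" using vec.span_minimal[OF BC(1) subC] .
  hence "vec.span BC = C" using BC(3) by blast
  hence cardC: "card C = q ^ (m * (?n - \<rho>))"
    using card_span_indep[OF BC(2)] BC(4) dimC cb by (simp add: power_mult)
  have card1: "card (fbar f ` C) = q ^ (m * (?n - \<rho>))"
    using card_image[OF inj_on_subset[OF fbar_inj[OF injf], of C]] cardC by simp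
  have rk_span: "rk \<iota> v \<le> \<rho>"
    if emb: "field_emb \<iota>" and ind: "vec.independent B" and cB: "card B = ?n - \<rho>"
      and vz: "\<forall>b\<in>B. phi \<iota> v b = 0"
    for \<iota> :: "'k \<Rightarrow> 'd::field" and v :: "'d ^ 'n" and B
  proof -
    have "B \<subseteq> {a. phi \<iota> v a = 0}" using vz by auto
    hence "vec.span B \<subseteq> {a. phi \<iota> v a = 0}" using vec.span_minimal ker_subspace[OF emb] by blast
    hence "card (vec.span B) \<le> card {a. phi \<iota> v a = 0}" by (rule card_mono[rotated]) simp
    hence "CARD('k) ^ (?n - \<rho>) \<le> card {a. phi \<iota> v a = 0}" using card_span_indep[OF ind] cB by simp
    thus ?thesis by (rule rk_le[OF emb])
  qed
  have ub: "\<exists>c\<in>C. rk \<iota>2 (x - fbar f c) \<le> \<rho>" for x :: "'c ^ 'n"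
  proof -
    let ?K = "{a::'k^'n. phi \<iota>2 x a \<in> range f}"
    have subK: "vec.subspace ?K"
      unfolding vec.subspace_def
    proof (intro conjI ballI allI)
      show "0 \<in> ?K" using phi_zero[OF emb2] f0 by (metis (mono_tags) mem_Collect_eq rangeI)
    next
      fix a b assume "a \<in> ?K" "b \<in> ?K"
      then obtain ya yb where "phi \<iota>2 x a = f ya" "phi \<iota>2 x b = f yb" by auto
      hence "phi \<iota>2 x (a + b) = f (ya + yb)" using phi_add[OF emb2, of x a b] fadd by simp
      thus "a + b \<in> ?K" by simp
    next
      fix c a assume "a \<in> ?K"
      then obtain ya where "phi \<iota>2 x a = f ya" by auto
      hence "phi \<iota>2 x (c *s a) = f (\<iota>1 c * ya)" using phi_scale[OF emb2, of x c a] fsc by simp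
      thus "c *s a \<in> ?K" by simp
    qed
    have cK: "q ^ (?n - \<rho>) \<le> card ?K" by (rule card_K[OF emb2 fadd injf ck cb cc])
    obtain BK where BK: "BK \<subseteq> ?K" "vec.independent BK" "?K \<subseteq> vec.span BK" "card BK = vec.dim ?K"
      using vec.basis_exists by blast
    have "vec.span BK \<subseteq> ?K" using vec.span_minimal[OF BK(1) subK] .
    hence "vec.span BK = ?K" using BK(3) by blast
    hence "card ?K = q ^ card BK" using card_span_indep[OF BK(2)] ck by simp
    hence "?n - \<rho> \<le> card BK" using cK q2 power_le_imp_le_exp by metis
    then obtain B where B: "B \<subseteq> BK" "card B = ?n - \<rho>" "finite B"
      using obtain_subset_with_card_n by metis
    have indB: "vec.independent B" using vec.independent_mono[OF BK(2) B(1)] .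
    have BsubK: "B \<subseteq> ?K" using B(1) BK(1) by blast
    let ?Psi = "\<lambda>c. restrict (\<lambda>b. phi \<iota>1 c b) B"
    have injPsi: "inj_on ?Psi C"
    proof (rule inj_onI, rule ccontr)
      fix c c' assume c: "c \<in> C" and c': "c' \<in> C" and e: "?Psi c = ?Psi c'" and ne: "c \<noteq> c'"
      have "\<forall>b\<in>B. phi \<iota>1 (c - c') b = 0"
      proof
        fix b assume "b \<in> B"
        thus "phi \<iota>1 (c - c') b = 0" using fun_cong[OF e, of b] by (simp add: phi_diff_v)
      qed
      hence "rk \<iota>1 (c - c') \<le> \<rho>" by (rule rk_span[OF emb1 indB B(2)])
      moreover have "\<rho> + 1 \<le> rank_dist \<iota>1 c c'" using mrd c c' ne unfolding has_min_rank_dist_def by blast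
      ultimately show False unfolding rank_dist_def by simp
    qed
    have sub: "?Psi ` C \<subseteq> B \<rightarrow>\<^sub>E (UNIV::'b set)" by (rule image_subsetI) simp
    have "card (?Psi ` C) = card (B \<rightarrow>\<^sub>E (UNIV::'b set))"
      using card_image[OF injPsi] cardC B cb by (simp add: card_PiE power_mult)
    hence imPsi: "?Psi ` C = B \<rightarrow>\<^sub>E (UNIV::'b set)"
      by (intro card_subset_eq[OF _ sub]) (simp add: finite_PiE B(3))
    let ?g = "restrict (\<lambda>b. inv f (phi \<iota>2 x b)) B"
    have "?g \<in> ?Psi ` C" unfolding imPsi by simp
    then obtain c where c: "c \<in> C" and gc: "?g = ?Psi c" by blast
    have "\<forall>b\<in>B. phi \<iota>2 (x - fbar f c) b = 0"
    proof
      fix b assume bB: "b \<in> B"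
      have "phi \<iota>1 c b = inv f (phi \<iota>2 x b)" using fun_cong[OF gc, of b] bB by simp
      hence "f (phi \<iota>1 c b) = phi \<iota>2 x b" using BsubK bB by (auto simp: f_inv_into_f)
      thus "phi \<iota>2 (x - fbar f c) b = 0" by (simp add: phi_diff_v phi_fbar[OF fadd fsc])
    qed
    hence "rk \<iota>2 (x - fbar f c) \<le> \<rho>" by (rule rk_span[OF emb2 indB B(2)])
    thus ?thesis using c by blast
  qed
  let ?M1 = "\<lambda>y. Min ((\<lambda>c. rank_dist \<iota>1 y c) ` C)"
  let ?M2 = "\<lambda>x. Min ((\<lambda>c. rank_dist \<iota>2 x c) ` (fbar f ` C))"
  have "Max (range ?M1) \<in> range ?M1" by (rule Max_in) simp_all
  hence "\<rho> \<in> range ?M1" using crad unfolding rank_cov_radius_def by simp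
  then obtain y where y: "?M1 y = \<rho>" by auto
  have "(\<lambda>c. rank_dist \<iota>2 (fbar f y) c) ` (fbar f ` C) = (\<lambda>c. rank_dist \<iota>1 y c) ` C"
    unfolding image_image rank_dist_def
    by (intro image_cong refl) (simp add: fbar_diff[OF fadd, symmetric] rk_fbar[OF fadd fsc injf])
  hence My: "?M2 (fbar f y) = \<rho>" using y by simp
  have le: "?M2 x \<le> \<rho>" for x
  proof -
    obtain c where c: "c \<in> C" and r: "rk \<iota>2 (x - fbar f c) \<le> \<rho>" using ub by blast
    have "?M2 x \<le> rank_dist \<iota>2 x (fbar f c)" by (rule Min_le) (use c in auto)
    thus ?thesis using r unfolding rank_dist_def by simp
  qed
  have rin: "\<rho> \<in> range ?M2" using My[symmetric] by (rule range_eqI)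
  have "rank_cov_radius \<iota>2 (fbar f ` C) = \<rho>" unfolding rank_cov_radius_def
  proof (rule Max_eqI)
    show "finite (range ?M2)" by simp
    show "z \<le> \<rho>" if "z \<in> range ?M2" for z using that le by auto
    show "\<rho> \<in> range ?M2" by (rule rin)
  qed
  with card1 show ?thesis by simp
qed

end
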